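(* For every $n \ge 1$, $$ f^+_n(x) = \sum_{w \in \mathcal{D}^B_n \cap B^*_n} x^{\mathrm{exc}_B(w)} \quad\text{and}\quad f^-_n(x) = \sum_{w \in \mathcal{D}^B_n \setminus B^*_n} x^{\mathrm{exc}_B(w)}. $$
   Context: A signed permutation of $[n]$ is a set $S = \{a_1, \dots, a_n\}$ with $a_i \in \{i, -i\}$, together with a bijection $w : S \to S$. $B_n$ is the set of all of them. - $a \in S$ is a $B$-excedance if $w(a) > a$, or if $a < 0$ and $w(a) = a$; $\mathrm{exc}_B(w)$ is their number. - $\mathcal{D}^B_n$ is the set of $w \in B_n$ having no $a \in S$ with $a > 0$ and $w(a) = a$. - $d^B_n(x) = \sum_{w \in \mathcal{D}^B_n} x^{\mathrm{exc}_B(w)}$. - For $w$ on the set $S$, $m_w$ denotes the minimum element of $S$ in the usual order of $\mathbb{Z}$, and $B^*_n = \{w \in B_n : w(m_w) > 0\}$. - $f^+_n, f^-_n$ are the unique real polynomials with $d^B_n = f^+_n + f^-_n$, $f^+_n(x) = x^n f^+_n(1/x)$ and $f^-_n(x) = x^{n+1} f^-_n(1/x)$. *)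

theory Defs
  imports "HOL-Computational_Algebra.Polynomial"
begin

text \<open>A signed permutation is a pair (S, w): S = {a_1,...,a_n} with a_i in {i,-i},
  and w a bijection S to S. Outside S, w is normalised to the identity so that
  each signed permutation has a unique representation.\<close>

type_synonym signed_perm = "int set \<times> (int \<Rightarrow> int)"

definition signsets :: "nat \<Rightarrow> int set set" where
  "signsets n = {S. \<exists>a. S = a ` {1..n} \<and> (\<forall>i\<in>{1..n}. a i = int i \<or> a i = - int i)}"

definition Bn :: "nat \<Rightarrow> signed_perm set" where
  "Bn n = {(S, w). S \<in> signsets n \<and> bij_betw w S S \<and> (\<forall>x. x \<notin> S \<longrightarrow> w x = x)}"

definition excB :: "signed_perm \<Rightarrow> nat" where
  "excB p = (case p of (S, w) \<Rightarrow> card {a\<in>S. w a > a \<or> (a < 0 \<and> w a = a)})"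

definition DB :: "nat \<Rightarrow> signed_perm set" where
  "DB n = {(S, w) \<in> Bn n. \<not> (\<exists>a\<in>S. a > 0 \<and> w a = a)}"

definition Bstar :: "nat \<Rightarrow> signed_perm set" where
  "Bstar n = {(S, w) \<in> Bn n. w (Min S) > 0}"

definition dB :: "nat \<Rightarrow> real poly" where
  "dB n = (\<Sum>p\<in>DB n. monom 1 (excB p))"

definition fpm :: "nat \<Rightarrow> real poly \<times> real poly" where
  "fpm n = (THE (fp, fm). dB n = fp + fm
      \<and> (\<forall>x::real. x \<noteq> 0 \<longrightarrow> poly fp x = x ^ n * poly fp (1 / x))
      \<and> (\<forall>x::real. x \<noteq> 0 \<longrightarrow> poly fm x = x ^ (n + 1) * poly fm (1 / x)))"

definition fplus :: "nat \<Rightarrow> real poly" where "fplus n = fst (fpm n)"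
definition fminus :: "nat \<Rightarrow> real poly" where "fminus n = snd (fpm n)"

end

theory Submission
  imports Defs "HOL-Combinatorics.Permutations"
begin


definition Ds :: "int set \<Rightarrow> (int \<Rightarrow> int) set" where
  "Ds S = {w. w permutes S \<and> (\<forall>a\<in>S. 0 < a \<longrightarrow> w a \<noteq> a)}"

definition exw :: "int set \<Rightarrow> (int \<Rightarrow> int) \<Rightarrow> nat" where
  "exw S w = card {a\<in>S. a \<le> w a}"

definition cl :: "int set \<Rightarrow> (int \<Rightarrow> int) \<Rightarrow> bool" where
  "cl S w \<longleftrightarrow> S = {} \<or> 0 < w (Min S)"

definition cnt :: "int set \<Rightarrow> bool \<Rightarrow> int \<Rightarrow> int" where
  "cnt S b j = (\<Sum>w\<in>Ds S. if cl S w = b \<and> int (exw S w) = j then 1 else 0)"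

lemma finite_Ds: "finite S \<Longrightarrow> finite (Ds S)"
  by (rule finite_subset[OF _ finite_permutations[of S]]) (auto simp: Ds_def)

lemma insert_map_mem:
  assumes fin: "finite S" and mS: "m \<in> S" and mmax: "\<forall>a\<in>S. a \<le> m"
    and i: "i \<in> S - {m}" and tau: "\<tau> permutes (S - {m})"
  shows "\<tau> \<circ> transpose i m permutes S"
proof -
  have "\<tau> permutes S" using tau by (rule permutes_subset) auto
  moreover have "transpose i m permutes S" using i mS by (intro permutes_swap_id) auto
  ultimately show ?thesis by (metis permutes_compose)
qed

lemma decomp_bij:
  assumes fin: "finite S" and mS: "m \<in> S" and mmax: "\<forall>a\<in>S. a \<le> m"
  defines "S' \<equiv> S - {m}"
  shows "bij_betw (\<lambda>(i,\<tau>). \<tau> \<circ> transpose i m)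
     (Sigma S' (\<lambda>i. Ds S') \<union> Sigma {i\<in>S'. 0 < i} (\<lambda>i. Ds (S' - {i})))
     {w\<in>Ds S. w m \<noteq> m}"
proof (rule bij_betw_imageI)
  show "inj_on (\<lambda>(i,\<tau>). \<tau> \<circ> transpose i m)
     (Sigma S' (\<lambda>i. Ds S') \<union> Sigma {i\<in>S'. 0 < i} (\<lambda>i. Ds (S' - {i})))"
  proof (rule inj_onI, clarify)
    fix i \<tau> i' \<tau>'
    assume A: "(i, \<tau>) \<in> Sigma S' (\<lambda>i. Ds S') \<union> Sigma {i\<in>S'. 0 < i} (\<lambda>i. Ds (S' - {i}))"
      and B: "(i', \<tau>') \<in> Sigma S' (\<lambda>i. Ds S') \<union> Sigma {i\<in>S'. 0 < i} (\<lambda>i. Ds (S' - {i}))"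
      and E: "\<tau> \<circ> transpose i m = \<tau>' \<circ> transpose i' m"
    have t1: "\<tau> permutes S'" using A by (auto simp: Ds_def intro: permutes_subset)
    have t2: "\<tau>' permutes S'" using B by (auto simp: Ds_def intro: permutes_subset)
    have iS: "i \<in> S'" "i' \<in> S'" using A B by auto
    have "\<tau> m = m" "\<tau>' m = m" using t1 t2 by (auto simp: S'_def intro: permutes_not_in)
    have w1: "(\<tau> \<circ> transpose i m) i = m" using \<open>\<tau> m = m\<close> by simp
    have w2: "(\<tau>' \<circ> transpose i' m) i' = m" using \<open>\<tau>' m = m\<close> by simp
    have "\<tau> \<circ> transpose i m permutes S"
      using insert_map_mem[OF fin mS mmax] iS t1 by (simp add: S'_def)
    hence "inj (\<tau> \<circ> transpose i m)" by (rule permutes_inj)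
    with w1 w2 E have ii: "i = i'" by (metis injD)
    have "\<tau> = (\<tau> \<circ> transpose i m) \<circ> transpose i m" by (simp add: fun_eq_iff)
    also have "\<dots> = (\<tau>' \<circ> transpose i' m) \<circ> transpose i m" using E by simp
    also have "\<dots> = \<tau>'" using ii by (simp add: fun_eq_iff)
    finally show "i = i' \<and> \<tau> = \<tau>'" using ii by simp
  qed
next
  show "(\<lambda>(i,\<tau>). \<tau> \<circ> transpose i m) `
     (Sigma S' (\<lambda>i. Ds S') \<union> Sigma {i\<in>S'. 0 < i} (\<lambda>i. Ds (S' - {i}))) = {w\<in>Ds S. w m \<noteq> m}"
  proof (rule set_eqI, rule iffI)
    fix w assume "w \<in> (\<lambda>(i,\<tau>). \<tau> \<circ> transpose i m) `
     (Sigma S' (\<lambda>i. Ds S') \<union> Sigma {i\<in>S'. 0 < i} (\<lambda>i. Ds (S' - {i})))"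
    then obtain i \<tau> where w: "w = \<tau> \<circ> transpose i m" and
      A: "(i, \<tau>) \<in> Sigma S' (\<lambda>i. Ds S') \<union> Sigma {i\<in>S'. 0 < i} (\<lambda>i. Ds (S' - {i}))" by auto
    have t1: "\<tau> permutes S'" using A by (auto simp: Ds_def intro: permutes_subset)
    have iS: "i \<in> S'" using A by auto
    have tm: "\<tau> m = m" using t1 by (auto simp: S'_def intro: permutes_not_in)
    have perm: "w permutes S" using insert_map_mem[OF fin mS mmax] iS t1 w by (simp add: S'_def)
    have ti: "\<tau> i \<in> S'" using t1 iS by (simp add: permutes_in_image)
    have wm: "w m \<noteq> m" using w ti by (auto simp: S'_def)
    have nfx: "w a \<noteq> a" if "a \<in> S" "0 < a" for a
    proof (cases "a = m")
      case True thus ?thesis using wm by simp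
    next
      case am: False
      show ?thesis
      proof (cases "a = i")
        case True thus ?thesis using w tm am by simp
      next
        case False
        hence "w a = \<tau> a" using w am by simp
        moreover have "\<tau> a \<noteq> a" using A that am False by (auto simp: Ds_def S'_def)
        ultimately show ?thesis by simp
      qed
    qed
    show "w \<in> {w\<in>Ds S. w m \<noteq> m}" using perm nfx wm by (simp add: Ds_def)
  next
    fix w assume "w \<in> {w\<in>Ds S. w m \<noteq> m}"
    hence perm: "w permutes S" and nf: "\<forall>a\<in>S. 0 < a \<longrightarrow> w a \<noteq> a" and wm: "w m \<noteq> m"
      by (auto simp: Ds_def)
    define i where "i = inv w m"
    have wi: "w i = m" using perm by (simp add: i_def permutes_inverses)
    have iS: "i \<in> S" using perm wi mS by (metis permutes_in_image)
    have im: "i \<noteq> m" using wi wm by auto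
    define \<tau> where "\<tau> = w \<circ> transpose i m"
    have tS: "\<tau> permutes S" unfolding \<tau>_def
      using permutes_compose[OF permutes_swap_id[OF iS mS] perm] .
    have tm: "\<tau> m = m" using wi by (simp add: \<tau>_def)
    have tS': "\<tau> permutes S'" unfolding S'_def
      by (rule permutes_superset[OF tS]) (use tm in auto)
    have weq: "w = \<tau> \<circ> transpose i m" by (simp add: \<tau>_def fun_eq_iff)
    have iS': "i \<in> S'" using iS im by (simp add: S'_def)
    show "w \<in> (\<lambda>(i,\<tau>). \<tau> \<circ> transpose i m) `
     (Sigma S' (\<lambda>i. Ds S') \<union> Sigma {i\<in>S'. 0 < i} (\<lambda>i. Ds (S' - {i})))"
    proof (cases "\<tau> i = i \<and> 0 < i")
      case True
      have "\<tau> permutes S' - {i}"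
        by (rule permutes_superset[OF tS']) (use True in auto)
      moreover have "\<forall>a\<in>S' - {i}. 0 < a \<longrightarrow> \<tau> a \<noteq> a"
        using nf by (auto simp: \<tau>_def S'_def)
      ultimately have "\<tau> \<in> Ds (S' - {i})" by (simp add: Ds_def)
      hence "(i, \<tau>) \<in> Sigma {i\<in>S'. 0 < i} (\<lambda>i. Ds (S' - {i}))" using iS' True by auto
      thus ?thesis using weq by (auto intro!: image_eqI[where x="(i,\<tau>)"])
    next
      case False
      have "\<forall>a\<in>S'. 0 < a \<longrightarrow> \<tau> a \<noteq> a"
      proof (intro ballI impI)
        fix a assume a: "a \<in> S'" "0 < a"
        show "\<tau> a \<noteq> a"
        proof (cases "a = i")
          case True thus ?thesis using False a by simp
        next
          case ai: False
          have "a \<noteq> m" using a by (simp add: S'_def)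
          hence "\<tau> a = w a" using ai by (simp add: \<tau>_def)
          thus ?thesis using nf a by (simp add: S'_def)
        qed
      qed
      hence "\<tau> \<in> Ds S'" using tS' by (simp add: Ds_def)
      hence "(i, \<tau>) \<in> Sigma S' (\<lambda>i. Ds S')" using iS' by auto
      thus ?thesis using weq by (auto intro!: image_eqI[where x="(i,\<tau>)"])
    qed
  qed
qed


lemma exw_ins:
  assumes fin: "finite S" and mS: "m \<in> S" and mmax: "\<forall>a\<in>S. a \<le> m"
    and i: "i \<in> S - {m}" and tau: "\<tau> permutes (S - {m})"
  shows "exw S (\<tau> \<circ> transpose i m) = Suc (card {a\<in>S-{m}-{i}. a \<le> \<tau> a})"
proof -
  have tm: "\<tau> m = m" using tau by (auto intro: permutes_not_in)
  have ti: "\<tau> i \<in> S - {m}" using tau i by (metis permutes_in_image)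
  hence tilt: "\<tau> i < m" using mmax by force
  have "{a\<in>S. a \<le> (\<tau> \<circ> transpose i m) a} = insert i {a\<in>S-{m}-{i}. a \<le> \<tau> a}"
  proof (rule set_eqI)
    fix a show "a \<in> {a\<in>S. a \<le> (\<tau> \<circ> transpose i m) a} \<longleftrightarrow> a \<in> insert i {a\<in>S-{m}-{i}. a \<le> \<tau> a}"
    proof (cases "a = m")
      case True thus ?thesis using i tilt by auto
    next
      case False
      show ?thesis
      proof (cases "a = i")
        case True thus ?thesis using i tm mmax by auto
      next
        case False thus ?thesis using \<open>a \<noteq> m\<close> by auto
      qed
    qed
  qed
  moreover have "finite {a\<in>S-{m}-{i}. a \<le> \<tau> a}" using fin by auto
  ultimately show ?thesis by (simp add: exw_def)
qed


lemma card_minus_i: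
  assumes fin: "finite S'" and i: "i \<in> S'"
  shows "int (card {a\<in>S'-{i}. a \<le> \<tau> a}) = int (exw S' \<tau>) - (if i \<le> \<tau> i then 1 else 0)"
proof -
  have "{a\<in>S'-{i}. a \<le> \<tau> a} = {a\<in>S'. a \<le> \<tau> a} - {i}" by auto
  moreover have "finite {a\<in>S'. a \<le> \<tau> a}" using fin by auto
  moreover have "i \<le> \<tau> i \<Longrightarrow> i \<in> {a\<in>S'. a \<le> \<tau> a}" using i by simp
  moreover have "\<not> i \<le> \<tau> i \<Longrightarrow> i \<notin> {a\<in>S'. a \<le> \<tau> a}" by simp
  moreover have "i \<le> \<tau> i \<Longrightarrow> card {a\<in>S'. a \<le> \<tau> a} > 0"
    using i fin by (auto simp: card_gt_0_iff)
  ultimately show ?thesis unfolding exw_def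
    by (cases "i \<le> \<tau> i") (simp_all add: card_Diff_singleton_if of_nat_diff)
qed


lemma exw_fixm:
  assumes fin: "finite S" and mS: "m \<in> S" and tau: "\<tau> permutes (S - {m})"
  shows "exw S \<tau> = Suc (exw (S - {m}) \<tau>)"
proof -
  have tm: "\<tau> m = m" using tau by (auto intro: permutes_not_in)
  have "{a\<in>S. a \<le> \<tau> a} = insert m {a\<in>S-{m}. a \<le> \<tau> a}" using tm mS by auto
  thus ?thesis using fin by (simp add: exw_def)
qed


lemma fixm_set:
  assumes fin: "finite S" and mS: "m \<in> S" and z: "0 \<notin> S"
  shows "{w\<in>Ds S. w m = m} = (if m < 0 then Ds (S - {m}) else {})"
proof (cases "m < 0")
  case True
  have "{w\<in>Ds S. w m = m} = Ds (S - {m})"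
  proof (rule set_eqI, rule iffI)
    fix w assume "w \<in> {w\<in>Ds S. w m = m}"
    hence "w permutes S" "\<forall>a\<in>S. 0 < a \<longrightarrow> w a \<noteq> a" "w m = m" by (auto simp: Ds_def)
    moreover have "w permutes (S - {m})" by (rule permutes_superset[OF \<open>w permutes S\<close>]) (use \<open>w m = m\<close> in auto)
    ultimately show "w \<in> Ds (S - {m})" by (auto simp: Ds_def)
  next
    fix w assume "w \<in> Ds (S - {m})"
    hence "w permutes (S - {m})" "\<forall>a\<in>S-{m}. 0 < a \<longrightarrow> w a \<noteq> a" by (auto simp: Ds_def)
    moreover have "w permutes S" by (rule permutes_subset[OF \<open>w permutes (S - {m})\<close>]) auto
    moreover have "w m = m" using \<open>w permutes (S - {m})\<close> by (auto intro: permutes_not_in)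
    ultimately show "w \<in> {w\<in>Ds S. w m = m}" using True by (auto simp: Ds_def)
  qed
  thus ?thesis using True by simp
next
  case False
  hence "0 < m" using z mS by (cases "m = 0") auto
  thus ?thesis using False mS by (auto simp: Ds_def)
qed


lemma sum_split:
  assumes fin: "finite S" and mS: "m \<in> S" and mmax: "\<forall>a\<in>S. a \<le> m" and z: "0 \<notin> S"
  shows "(\<Sum>w\<in>Ds S. f w) = (if m < 0 then (\<Sum>w\<in>Ds (S-{m}). f w) else 0)
     + (\<Sum>\<tau>\<in>Ds (S-{m}). \<Sum>i\<in>S-{m}. f (\<tau> \<circ> transpose i m))
     + (\<Sum>i\<in>{i\<in>S-{m}. 0 < i}. \<Sum>\<tau>\<in>Ds (S-{m}-{i}). f (\<tau> \<circ> transpose i m))"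
proof -
  define S' where "S' = S - {m}"
  have finS': "finite S'" using fin by (simp add: S'_def)
  have "Ds S = {w\<in>Ds S. w m = m} \<union> {w\<in>Ds S. w m \<noteq> m}" by auto
  hence "(\<Sum>w\<in>Ds S. f w) = (\<Sum>w\<in>{w\<in>Ds S. w m = m}. f w) + (\<Sum>w\<in>{w\<in>Ds S. w m \<noteq> m}. f w)"
    by (subst sum.union_disjoint[symmetric]) (use finite_Ds[OF fin] in auto)
  also have "(\<Sum>w\<in>{w\<in>Ds S. w m = m}. f w) = (if m < 0 then (\<Sum>w\<in>Ds (S-{m}). f w) else 0)"
    using fixm_set[OF fin mS z] by simp
  also have "(\<Sum>w\<in>{w\<in>Ds S. w m \<noteq> m}. f w) =
     (\<Sum>x\<in>Sigma S' (\<lambda>i. Ds S') \<union> Sigma {i\<in>S'. 0 < i} (\<lambda>i. Ds (S' - {i})).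
         f ((\<lambda>(i,\<tau>). \<tau> \<circ> transpose i m) x))"
    using sum.reindex_bij_betw[OF decomp_bij[OF fin mS mmax], of f] by (simp add: S'_def)
  also have "\<dots> = (\<Sum>x\<in>Sigma S' (\<lambda>i. Ds S'). f ((\<lambda>(i,\<tau>). \<tau> \<circ> transpose i m) x))
      + (\<Sum>x\<in>Sigma {i\<in>S'. 0 < i} (\<lambda>i. Ds (S' - {i})). f ((\<lambda>(i,\<tau>). \<tau> \<circ> transpose i m) x))"
  proof (rule sum.union_disjoint)
    show "finite (Sigma S' (\<lambda>i. Ds S'))" using finS' finite_Ds[OF finS'] by auto
    show "finite (Sigma {i\<in>S'. 0 < i} (\<lambda>i. Ds (S' - {i})))"
      using finS' by (auto intro!: finite_SigmaI finite_Ds)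
    show "Sigma S' (\<lambda>i. Ds S') \<inter> Sigma {i\<in>S'. 0 < i} (\<lambda>i. Ds (S' - {i})) = {}"
    proof (rule ccontr)
      assume "Sigma S' (\<lambda>i. Ds S') \<inter> Sigma {i\<in>S'. 0 < i} (\<lambda>i. Ds (S' - {i})) \<noteq> {}"
      then obtain i \<tau> where A: "i \<in> S'" "0 < i" "\<tau> \<in> Ds S'" "\<tau> \<in> Ds (S' - {i})" by auto
      hence "\<tau> i = i" by (auto simp: Ds_def intro: permutes_not_in)
      thus False using A by (auto simp: Ds_def)
    qed
  qed
  also have "(\<Sum>x\<in>Sigma S' (\<lambda>i. Ds S'). f ((\<lambda>(i,\<tau>). \<tau> \<circ> transpose i m) x))
      = (\<Sum>i\<in>S'. \<Sum>\<tau>\<in>Ds S'. f (\<tau> \<circ> transpose i m))"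
    by (simp add: sum.cartesian_product split_def)
  also have "\<dots> = (\<Sum>\<tau>\<in>Ds S'. \<Sum>i\<in>S'. f (\<tau> \<circ> transpose i m))"
    by (rule sum.swap)
  also have "(\<Sum>x\<in>Sigma {i\<in>S'. 0 < i} (\<lambda>i. Ds (S' - {i})). f ((\<lambda>(i,\<tau>). \<tau> \<circ> transpose i m) x))
      = (\<Sum>i\<in>{i\<in>S'. 0 < i}. \<Sum>\<tau>\<in>Ds (S'-{i}). f (\<tau> \<circ> transpose i m))"
    by (subst sum.Sigma) (use finS' in \<open>auto intro: finite_Ds simp: split_def\<close>)
  finally show ?thesis by (simp add: S'_def o_def add.assoc)
qed




locale dset =
  fixes S :: "int set"
  assumes fin: "finite S" and z: "0 \<notin> S" and c2: "2 \<le> card S"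
begin

definition "m = Max S"
definition "S' = S - {m}"
definition "p = Min S'"

lemma ne: "S \<noteq> {}" using c2 by auto
lemma mS: "m \<in> S" using fin ne by (simp add: m_def)
lemma mmax: "\<forall>a\<in>S. a \<le> m" using fin by (simp add: m_def)
lemma finS': "finite S'" using fin by (simp add: S'_def)
lemma cardS': "card S' = card S - 1" using fin mS by (simp add: S'_def)
lemma neS': "S' \<noteq> {}" using cardS' c2 by auto
lemma pS': "p \<in> S'" using finS' neS' by (simp add: p_def)
lemma pmin: "\<forall>a\<in>S'. p \<le> a" using finS' by (simp add: p_def)
lemma MinS: "Min S = p"
proof (rule Min_eqI[OF fin])
  show "p \<in> S" using pS' by (simp add: S'_def)
  fix a assume "a \<in> S" thus "p \<le> a" using pmin mmax pS' by (cases "a = m") (auto simp: S'_def)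
qed
lemma pm: "p \<noteq> m" using pS' by (simp add: S'_def)
lemma Sdecomp: "S = insert m S'" using mS by (auto simp: S'_def)

lemma cl_ins:
  assumes tau: "\<tau> permutes S'" and i: "i \<in> S'"
  shows "cl S (\<tau> \<circ> transpose i m) = (if i = p then 0 < m else 0 < \<tau> p)"
proof -
  have tm: "\<tau> m = m" using tau by (auto simp: S'_def intro: permutes_not_in)
  show ?thesis using ne tm pm by (auto simp: cl_def MinS)
qed

lemma cl_S': "cl S' \<tau> = (0 < \<tau> p)"
  using neS' by (simp add: cl_def p_def)

lemma cl_fix: "cl S \<tau> = cl S' \<tau>"
  using ne neS' by (simp add: cl_def MinS p_def)

lemma cl_ins2:
  assumes i: "i \<in> S'" "0 < i" and rho: "\<rho> \<in> Ds (S' - {i})"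
  shows "cl S (\<rho> \<circ> transpose i m) = cl (S' - {i}) \<rho>"
proof -
  have rp: "\<rho> permutes (S' - {i})" using rho by (simp add: Ds_def)
  have rm: "\<rho> m = m" using rp by (auto simp: S'_def intro: permutes_not_in)
  have ri: "\<rho> i = i" using rp by (auto intro: permutes_not_in)
  show ?thesis
  proof (cases "i = p")
    case True
    have "0 < m" using i mmax by (auto simp: S'_def)
    hence L: "cl S (\<rho> \<circ> transpose i m) = True" using True rm by (simp add: cl_def MinS)
    have "cl (S' - {i}) \<rho>"
    proof (cases "S' - {i} = {}")
      case True thus ?thesis by (simp add: cl_def)
    next
      case False
      hence "Min (S' - {i}) \<in> S' - {i}" using finS' by (intro Min_in) auto
      hence "\<rho> (Min (S' - {i})) \<in> S' - {i}" by (rule iffD2[OF permutes_in_image[OF rp]])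
      hence "0 < \<rho> (Min (S' - {i}))" using pmin True i by force
      thus ?thesis by (simp add: cl_def)
    qed
    thus ?thesis using L by simp
  next
    case False
    have M: "Min (S' - {i}) = p"
      by (rule Min_eqI) (use finS' pmin pS' False in auto)
    have "S' - {i} \<noteq> {}" using pS' False by auto
    thus ?thesis using False pm M ne by (simp add: cl_def MinS)
  qed
qed

lemma exw_ins':
  assumes tau: "\<tau> permutes S'" and i: "i \<in> S'"
  shows "int (exw S (\<tau> \<circ> transpose i m)) = int (exw S' \<tau>) + (if i \<le> \<tau> i then 0 else 1)"
proof -
  have "exw S (\<tau> \<circ> transpose i m) = Suc (card {a\<in>S-{m}-{i}. a \<le> \<tau> a})"
    by (rule exw_ins[OF fin mS mmax]) (use i tau in \<open>auto simp: S'_def\<close>)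
  moreover have "int (card {a\<in>S'-{i}. a \<le> \<tau> a}) = int (exw S' \<tau>) - (if i \<le> \<tau> i then 1 else 0)"
    by (rule card_minus_i[OF finS' i])
  ultimately show ?thesis by (simp add: S'_def)
qed

lemma exw_ins2:
  assumes i: "i \<in> S'" and rho: "\<rho> \<in> Ds (S' - {i})"
  shows "exw S (\<rho> \<circ> transpose i m) = Suc (exw (S' - {i}) \<rho>)"
proof -
  have rp: "\<rho> permutes S'" using rho by (auto simp: Ds_def intro: permutes_subset)
  have "exw S (\<rho> \<circ> transpose i m) = Suc (card {a\<in>S-{m}-{i}. a \<le> \<rho> a})"
    by (rule exw_ins[OF fin mS mmax]) (use i rp in \<open>auto simp: S'_def\<close>)
  thus ?thesis by (simp add: exw_def S'_def)
qed

lemma ind_sum: "(\<Sum>i\<in>A. if Q i then 1 else 0) = (int (card {i\<in>A. Q i}))" if "finite A"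
  using that by (simp add: sum.inter_filter[symmetric])

lemma inner_sum:
  assumes tau: "\<tau> \<in> Ds S'"
  shows "(\<Sum>i\<in>S'. (if cl S (\<tau> \<circ> transpose i m) = b \<and> int (exw S (\<tau> \<circ> transpose i m)) = j then 1 else 0::int))
    = (if (0 < m) = b \<and> int (exw S' \<tau>) = j then 1 else 0)
      + (if cl S' \<tau> = b \<and> int (exw S' \<tau>) = j then j - 1 else 0)
      + (if cl S' \<tau> = b \<and> int (exw S' \<tau>) = j - 1 then int (card S') - j + 1 else 0)"
proof -
  have tp: "\<tau> permutes S'" using tau by (simp add: Ds_def)
  define e where "e = int (exw S' \<tau>)"
  have tpp: "p \<le> \<tau> p" using tp pS' pmin by (simp add: permutes_in_image)
  have S'ins: "S' = insert p (S' - {p})" using pS' by auto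
  have h1: "(\<Sum>i\<in>S'. (if cl S (\<tau> \<circ> transpose i m) = b \<and> int (exw S (\<tau> \<circ> transpose i m)) = j then 1 else 0::int))
     = (if cl S (\<tau> \<circ> transpose p m) = b \<and> int (exw S (\<tau> \<circ> transpose p m)) = j then 1 else 0)
       + (\<Sum>i\<in>S'-{p}. (if cl S (\<tau> \<circ> transpose i m) = b \<and> int (exw S (\<tau> \<circ> transpose i m)) = j then 1 else 0::int))"
    by (rule sum.remove[OF finS' pS'])
  have h2: "(if cl S (\<tau> \<circ> transpose p m) = b \<and> int (exw S (\<tau> \<circ> transpose p m)) = j then 1 else 0::int)
      = (if (0 < m) = b \<and> e = j then 1 else 0)"
    using cl_ins[OF tp pS'] exw_ins'[OF tp pS'] tpp by (simp add: e_def)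
  have h3: "(\<Sum>i\<in>S'-{p}. (if cl S (\<tau> \<circ> transpose i m) = b \<and> int (exw S (\<tau> \<circ> transpose i m)) = j then 1 else 0::int))
      = (\<Sum>i\<in>S'-{p}. (if cl S' \<tau> = b \<and> e = j \<and> i \<le> \<tau> i then 1 else 0)
           + (if cl S' \<tau> = b \<and> e = j - 1 \<and> \<not> i \<le> \<tau> i then 1 else 0))"
  proof (rule sum.cong[OF refl])
    fix i assume i: "i \<in> S' - {p}"
    show "(if cl S (\<tau> \<circ> transpose i m) = b \<and> int (exw S (\<tau> \<circ> transpose i m)) = j then 1 else 0::int)
      = (if cl S' \<tau> = b \<and> e = j \<and> i \<le> \<tau> i then 1 else 0)
           + (if cl S' \<tau> = b \<and> e = j - 1 \<and> \<not> i \<le> \<tau> i then 1 else 0)"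
      using cl_ins[OF tp, of i] exw_ins'[OF tp, of i] i cl_S'[of \<tau>] by (auto simp: e_def)
  qed
  have h4: "(\<Sum>i\<in>S'-{p}. (if cl S' \<tau> = b \<and> e = j \<and> i \<le> \<tau> i then 1 else 0)
           + (if cl S' \<tau> = b \<and> e = j - 1 \<and> \<not> i \<le> \<tau> i then 1 else 0)) = (\<Sum>i\<in>S'-{p}. (if cl S' \<tau> = b \<and> e = j \<and> i \<le> \<tau> i then 1 else 0))
           + (\<Sum>i\<in>S'-{p}. (if cl S' \<tau> = b \<and> e = j - 1 \<and> \<not> i \<le> \<tau> i then 1 else 0))"
    by (rule sum.distrib)
  have h5: "(\<Sum>i\<in>S'-{p}. (if cl S' \<tau> = b \<and> e = j \<and> i \<le> \<tau> i then 1 else 0::int))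
      = (if cl S' \<tau> = b \<and> e = j then j - 1 else 0)"
  proof -
    have "int (card {i\<in>S'-{p}. i \<le> \<tau> i}) = e - 1"
      using card_minus_i[OF finS' pS', of \<tau>] tpp by (simp add: e_def)
    moreover have "(\<Sum>i\<in>S'-{p}. (if cl S' \<tau> = b \<and> e = j \<and> i \<le> \<tau> i then 1 else 0::int))
        = (if cl S' \<tau> = b \<and> e = j then (\<Sum>i\<in>S'-{p}. (if i \<le> \<tau> i then 1 else 0)) else 0)"
      by auto
    ultimately show ?thesis using ind_sum[of "S'-{p}" "\<lambda>i. i \<le> \<tau> i"] finS' by auto
  qed
  have h6: "(\<Sum>i\<in>S'-{p}. (if cl S' \<tau> = b \<and> e = j - 1 \<and> \<not> i \<le> \<tau> i then 1 else 0::int))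
      = (if cl S' \<tau> = b \<and> e = j - 1 then int (card S') - j + 1 else 0)"
  proof -
    have "{i\<in>S'-{p}. \<not> i \<le> \<tau> i} = S' - {a\<in>S'. a \<le> \<tau> a}" using tpp by auto
    hence "card {i\<in>S'-{p}. \<not> i \<le> \<tau> i} = card S' - card {a\<in>S'. a \<le> \<tau> a}"
      using finS' by (simp add: card_Diff_subset)
    moreover have "card {a\<in>S'. a \<le> \<tau> a} \<le> card S'" using finS' by (intro card_mono) auto
    ultimately have "int (card {i\<in>S'-{p}. \<not> i \<le> \<tau> i}) = int (card S') - e"
      by (simp add: e_def exw_def of_nat_diff)
    moreover have "(\<Sum>i\<in>S'-{p}. (if cl S' \<tau> = b \<and> e = j - 1 \<and> \<not> i \<le> \<tau> i then 1 else 0::int))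
        = (if cl S' \<tau> = b \<and> e = j - 1 then (\<Sum>i\<in>S'-{p}. (if \<not> i \<le> \<tau> i then 1 else 0)) else 0)"
      by auto
    ultimately show ?thesis using ind_sum[of "S'-{p}" "\<lambda>i. \<not> i \<le> \<tau> i"] finS' by auto
  qed
  show ?thesis unfolding e_def[symmetric] h1 h2 h3 h4 h5 h6 by (simp add: add.assoc)
qed

end



context dset
begin

lemma recur:
  "cnt S b j = (if m < 0 then cnt S' b (j-1) else 0)
     + (if (0 < m) = b then cnt S' True j + cnt S' False j else 0)
     + (j - 1) * cnt S' b j + (int (card S') - j + 1) * cnt S' b (j - 1)
     + (\<Sum>i\<in>{i\<in>S'. 0 < i}. cnt (S' - {i}) b (j - 1))"
proof -
  define f where "f w = (if cl S w = b \<and> int (exw S w) = j then 1 else 0::int)" for w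
  define g where "g c k \<tau> = (if cl S' \<tau> = c \<and> int (exw S' \<tau>) = k then 1 else 0::int)" for c k \<tau>
  have "cnt S b j = sum f (Ds S)" by (simp add: cnt_def f_def)
  also have "\<dots> = (if m < 0 then (\<Sum>w\<in>Ds S'. f w) else 0)
     + (\<Sum>\<tau>\<in>Ds S'. \<Sum>i\<in>S'. f (\<tau> \<circ> transpose i m))
     + (\<Sum>i\<in>{i\<in>S'. 0 < i}. \<Sum>\<tau>\<in>Ds (S'-{i}). f (\<tau> \<circ> transpose i m))"
    using sum_split[OF fin mS mmax z, of f] by (simp add: S'_def)
  also have "(if m < 0 then (\<Sum>w\<in>Ds S'. f w) else 0) = (if m < 0 then cnt S' b (j-1) else 0)"
  proof -
    have "(\<Sum>w\<in>Ds S'. f w) = cnt S' b (j-1)"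
      unfolding cnt_def
    proof (rule sum.cong[OF refl])
      fix w assume "w \<in> Ds S'"
      hence "w permutes S - {m}" by (simp add: Ds_def S'_def)
      hence "exw S w = Suc (exw S' w)" using exw_fixm[OF fin mS] by (simp add: S'_def)
      thus "f w = (if cl S' w = b \<and> int (exw S' w) = j - 1 then 1 else 0)"
        by (auto simp: f_def cl_fix)
    qed
    thus ?thesis by simp
  qed
  also have "(\<Sum>\<tau>\<in>Ds S'. \<Sum>i\<in>S'. f (\<tau> \<circ> transpose i m))
     = (\<Sum>\<tau>\<in>Ds S'. (if (0 < m) = b then g True j \<tau> + g False j \<tau> else 0)
          + (j - 1) * g b j \<tau> + (int (card S') - j + 1) * g b (j - 1) \<tau>)"
  proof (rule sum.cong[OF refl])
    fix \<tau> assume t: "\<tau> \<in> Ds S'"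
    show "(\<Sum>i\<in>S'. f (\<tau> \<circ> transpose i m)) = (if (0 < m) = b then g True j \<tau> + g False j \<tau> else 0)
          + (j - 1) * g b j \<tau> + (int (card S') - j + 1) * g b (j - 1) \<tau>"
      unfolding f_def inner_sum[OF t] by (auto simp: g_def)
  qed
  also have "\<dots> = (if (0 < m) = b then cnt S' True j + cnt S' False j else 0)
     + (j - 1) * cnt S' b j + (int (card S') - j + 1) * cnt S' b (j - 1)"
    by (simp add: sum.distrib sum_distrib_left cnt_def g_def[abs_def])
  also have "(\<Sum>i\<in>{i\<in>S'. 0 < i}. \<Sum>\<tau>\<in>Ds (S'-{i}). f (\<tau> \<circ> transpose i m))
     = (\<Sum>i\<in>{i\<in>S'. 0 < i}. cnt (S' - {i}) b (j - 1))"
  proof (rule sum.cong[OF refl])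
    fix i assume i: "i \<in> {i\<in>S'. 0 < i}"
    show "(\<Sum>\<tau>\<in>Ds (S'-{i}). f (\<tau> \<circ> transpose i m)) = cnt (S' - {i}) b (j - 1)"
      unfolding cnt_def
    proof (rule sum.cong[OF refl])
      fix \<rho> assume r: "\<rho> \<in> Ds (S' - {i})"
      show "f (\<rho> \<circ> transpose i m) = (if cl (S' - {i}) \<rho> = b \<and> int (exw (S' - {i}) \<rho>) = j - 1 then 1 else 0)"
        using cl_ins2[OF _ _ r] exw_ins2[OF _ r] i by (auto simp: f_def)
    qed
  qed
  finally show ?thesis by (simp add: add.assoc)
qed

end



lemma cnt_neg_zero:
  assumes "finite S" "S \<noteq> {}" "\<forall>a\<in>S. a < 0"
  shows "cnt S True j = 0"
  unfolding cnt_def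
proof (rule sum.neutral, rule ballI)
  fix w assume "w \<in> Ds S"
  hence "w permutes S" by (simp add: Ds_def)
  moreover have "Min S \<in> S" using assms by simp
  ultimately have "w (Min S) \<in> S" by (simp add: permutes_in_image)
  hence "\<not> cl S w" using assms by (auto simp: cl_def)
  thus "(if cl S w = True \<and> int (exw S w) = j then 1 else 0) = 0" by simp
qed

lemma cnt_empty: "cnt {} b j = (if b \<and> j = 0 then 1 else 0)"
proof -
  have "Ds {} = {id}" by (auto simp: Ds_def)
  thus ?thesis by (simp add: cnt_def cl_def exw_def)
qed

lemma cnt_single:
  assumes "a \<noteq> 0"
  shows "cnt {a} b j = (if a < 0 \<and> \<not> b \<and> j = 1 then 1 else 0)"
proof (cases "a < 0")
  case True
  hence "Ds {a} = {id}" by (auto simp: Ds_def)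
  thus ?thesis using True by (auto simp: cnt_def cl_def exw_def)
next
  case False
  hence "Ds {a} = {}" using assms by (auto simp: Ds_def)
  thus ?thesis using False by (simp add: cnt_def)
qed

lemma symm:
  assumes "finite S" "0 \<notin> S"
  shows "(\<forall>j. cnt S True j = cnt S True (int (card S) - j))
       \<and> (\<forall>j. cnt S False j = cnt S False (int (card S) + 1 - j))"
  using assms
proof (induction "card S" arbitrary: S rule: less_induct)
  case less
  show ?case
  proof (cases "card S \<le> 1")
    case True
    show ?thesis
    proof (cases "card S = 0")
      case True
      hence "S = {}" using less.prems by simp
      thus ?thesis by (simp add: cnt_empty)
    next
      case False
      hence "card S = 1" using True by simp
      then obtain a where S: "S = {a}" by (auto simp: card_1_singleton_iff)
      hence "a \<noteq> 0" using less.prems by auto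
      thus ?thesis using S by (auto simp: cnt_single)
    qed
  next
    case False
    interpret dset S using less.prems False by unfold_locales auto
    define n where "n = int (card S)"
    have cS': "int (card S') = n - 1" using cardS' False by (simp add: n_def of_nat_diff)
    have lt1: "card S' < card S" using cardS' False by simp
    have finS'': "finite S'" "0 \<notin> S'" using finS' z by (auto simp: S'_def)
    note IH1 = less.hyps[OF lt1 finS'']
    have u1: "cnt S' True k = cnt S' True (n - 1 - k)" for k
    proof -
      have "cnt S' True k = cnt S' True (int (card S') - k)" using IH1 by blast
      thus ?thesis unfolding cS' .
    qed
    have v1: "cnt S' False k = cnt S' False (n - k)" for k
    proof -
      have "cnt S' False k = cnt S' False (int (card S') + 1 - k)" using IH1 by blast
      thus ?thesis unfolding cS' by simp
    qed
    have IH2: "cnt (S' - {i}) True k = cnt (S' - {i}) True (n - 2 - k)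
        \<and> cnt (S' - {i}) False k = cnt (S' - {i}) False (n - 1 - k)" if i: "i \<in> S'" for i k
    proof -
      have "card S' > 0" using i finS' by (auto simp: card_gt_0_iff)
      hence c: "int (card (S' - {i})) = n - 2" using cS' i finS' by (simp add: of_nat_diff)
      have lt: "card (S' - {i}) < card S" using lt1 i finS' by (simp add: card_Diff1_less order.strict_trans)
      have "finite (S' - {i})" "0 \<notin> S' - {i}" using finS'' by auto
      note IH = less.hyps[OF lt this]
      have e1: "cnt (S' - {i}) True k = cnt (S' - {i}) True (int (card (S' - {i})) - k)"
        using IH by blast
      have e2: "cnt (S' - {i}) False k = cnt (S' - {i}) False (int (card (S' - {i})) + 1 - k)"
        using IH by blast
      have "n - 2 + 1 - k = n - 1 - k" by simp
      thus ?thesis using e1 e2 unfolding c by metis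
    qed
    show ?thesis
    proof (cases "m < 0")
      case mneg: True
      have allneg: "\<forall>a\<in>S. a < 0" using mmax mneg by force
      have allneg': "\<forall>a\<in>S'. a < 0" using allneg by (simp add: S'_def)
      have u0: "cnt S True k = 0" for k using cnt_neg_zero[OF fin ne allneg] .
      have u0': "cnt S' True k = 0" for k using cnt_neg_zero[OF finS' neS' allneg'] .
      have empt: "{i\<in>S'. 0 < i} = {}" using allneg' by force
      have rv: "cnt S False k = cnt S' False (k-1) + cnt S' False k + (k - 1) * cnt S' False k
          + (n - k) * cnt S' False (k - 1)" for k
        using recur[of False k] mneg empt u0' cS' by simp
      have "cnt S False j = cnt S False (n + 1 - j)" for j
      proof -
        have a1: "cnt S' False (n + 1 - j) = cnt S' False (j - 1)" using v1[of "n + 1 - j"] by simp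
        have a2: "cnt S' False (n + 1 - j - 1) = cnt S' False j" using v1[of "n - j"] by simp
        show ?thesis unfolding rv a1 a2 by (simp add: algebra_simps)
      qed
      thus ?thesis using u0 n_def by simp
    next
      case mpos: False
      hence mp: "0 < m" using z mS by (cases "m = 0") auto
      have ru: "cnt S True k = cnt S' True k + cnt S' False k + (k - 1) * cnt S' True k
          + (n - k) * cnt S' True (k - 1) + (\<Sum>i\<in>{i\<in>S'. 0 < i}. cnt (S' - {i}) True (k - 1))" for k
        using recur[of True k] mp cS' by simp
      have rv: "cnt S False k = (k - 1) * cnt S' False k
          + (n - k) * cnt S' False (k - 1) + (\<Sum>i\<in>{i\<in>S'. 0 < i}. cnt (S' - {i}) False (k - 1))" for k
        using recur[of False k] mp cS' by simp
      have "cnt S True j = cnt S True (n - j)" for j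
      proof -
        have s: "(\<Sum>i\<in>{i\<in>S'. 0 < i}. cnt (S' - {i}) True (n - j - 1))
            = (\<Sum>i\<in>{i\<in>S'. 0 < i}. cnt (S' - {i}) True (j - 1))"
        proof (rule sum.cong[OF refl])
          fix i assume "i \<in> {i\<in>S'. 0 < i}"
          hence "cnt (S' - {i}) True (n - j - 1) = cnt (S' - {i}) True (n - 2 - (n - j - 1))"
            using IH2 by blast
          moreover have "n - 2 - (n - j - 1) = j - 1" by simp
          ultimately show "cnt (S' - {i}) True (n - j - 1) = cnt (S' - {i}) True (j - 1)" by simp
        qed
        have a1: "cnt S' True (n - j) = cnt S' True (j - 1)" using u1[of "n - j"] by simp
        have a2: "cnt S' True (n - j - 1) = cnt S' True j" using u1[of "n - j - 1"] by simp
        have a3: "cnt S' False (n - j) = cnt S' False j" using v1[of "n - j"] by simp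
        show ?thesis unfolding ru s a1 a2 a3 by (simp add: algebra_simps)
      qed
      moreover have "cnt S False j = cnt S False (n + 1 - j)" for j
      proof -
        have s: "(\<Sum>i\<in>{i\<in>S'. 0 < i}. cnt (S' - {i}) False (n + 1 - j - 1))
            = (\<Sum>i\<in>{i\<in>S'. 0 < i}. cnt (S' - {i}) False (j - 1))"
        proof (rule sum.cong[OF refl])
          fix i assume "i \<in> {i\<in>S'. 0 < i}"
          hence "cnt (S' - {i}) False (n + 1 - j - 1) = cnt (S' - {i}) False (n - 1 - (n + 1 - j - 1))"
            using IH2 by blast
          moreover have "n - 1 - (n + 1 - j - 1) = j - 1" by simp
          ultimately show "cnt (S' - {i}) False (n + 1 - j - 1) = cnt (S' - {i}) False (j - 1)" by simp
        qed
        have a1: "cnt S' False (n + 1 - j) = cnt S' False (j - 1)" using v1[of "n + 1 - j"] by simp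
        have a2: "cnt S' False (n + 1 - j - 1) = cnt S' False j" using v1[of "n - j"] by simp
        show ?thesis unfolding rv s a1 a2 by (simp add: algebra_simps)
      qed
      ultimately show ?thesis using n_def by simp
    qed
  qed
qed



lemma ind_sum_int: "finite A \<Longrightarrow> (\<Sum>w\<in>A. if P w then 1 else 0::int) = int (card {w\<in>A. P w})"
  by (simp add: sum.inter_filter[symmetric])

lemma pal_gen:
  fixes x :: real and e :: "'a \<Rightarrow> nat"
  assumes fin: "finite A" and bound: "\<forall>w\<in>A. e w \<le> d"
    and sym: "\<forall>j::int. (\<Sum>w\<in>A. if int (e w) = j then 1 else 0::int)
                   = (\<Sum>w\<in>A. if int (e w) = int d - j then 1 else 0)"
    and x: "x \<noteq> 0"
  shows "(\<Sum>w\<in>A. x ^ e w) = x ^ d * (\<Sum>w\<in>A. (1/x) ^ e w)"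
proof -
  define c where "c j = card {w\<in>A. e w = j}" for j
  have ck: "(\<Sum>w\<in>A. if int (e w) = int k then 1 else 0::int) = int (c k)" for k
    unfolding ind_sum_int[OF fin] c_def by simp
  have cs: "c j = c (d - j)" if "j \<le> d" for j
  proof -
    have "(\<Sum>w\<in>A. if int (e w) = int j then 1 else 0::int)
                   = (\<Sum>w\<in>A. if int (e w) = int d - int j then 1 else 0)" using sym by blast
    hence "(\<Sum>w\<in>A. if int (e w) = int j then 1 else 0::int)
                   = (\<Sum>w\<in>A. if int (e w) = int (d - j) then 1 else 0)"
      by (simp only: of_nat_diff[OF that, symmetric])
    hence "int (c j) = int (c (d - j))" unfolding ck .
    thus ?thesis by simp
  qed
  have img: "e ` A \<subseteq> {0..d}" using bound by auto
  have L: "(\<Sum>w\<in>A. x ^ e w) = (\<Sum>j\<in>{0..d}. real (c j) * x ^ j)"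
  proof -
    have "(\<Sum>w\<in>A. x ^ e w) = (\<Sum>j\<in>{0..d}. \<Sum>w\<in>{w\<in>A. e w = j}. x ^ e w)"
      by (rule sum.group[OF fin _ img, symmetric]) simp
    also have "\<dots> = (\<Sum>j\<in>{0..d}. real (c j) * x ^ j)"
      by (rule sum.cong[OF refl]) (simp add: c_def)
    finally show ?thesis .
  qed
  have "x ^ d * (\<Sum>w\<in>A. (1/x) ^ e w) = (\<Sum>w\<in>A. x ^ (d - e w))"
    unfolding sum_distrib_left
  proof (rule sum.cong[OF refl])
    fix w assume "w \<in> A"
    hence "e w \<le> d" using bound by simp
    thus "x ^ d * (1 / x) ^ e w = x ^ (d - e w)" using x by (simp add: power_diff power_one_over)
  qed
  also have "\<dots> = (\<Sum>j\<in>{0..d}. \<Sum>w\<in>{w\<in>A. e w = j}. x ^ (d - e w))"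
    by (rule sum.group[OF fin _ img, symmetric]) simp
  also have "\<dots> = (\<Sum>j\<in>{0..d}. real (c j) * x ^ (d - j))"
    by (rule sum.cong[OF refl]) (simp add: c_def)
  also have "\<dots> = (\<Sum>j\<in>{0..d}. real (c (d + 0 - j)) * x ^ (d - (d + 0 - j)))"
    by (rule sum.atLeastAtMost_rev)
  also have "\<dots> = (\<Sum>j\<in>{0..d}. real (c j) * x ^ j)"
    by (rule sum.cong[OF refl]) (auto simp: cs[symmetric])
  finally show ?thesis using L by simp
qed


lemma signsets_props:
  assumes "S \<in> signsets n"
  shows "finite S" "0 \<notin> S" "card S = n"
proof -
  obtain a where S: "S = a ` {1..n}" and a: "\<forall>i\<in>{1..n}. a i = int i \<or> a i = - int i"
    using assms by (auto simp: signsets_def)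
  show "finite S" using S by simp
  show "0 \<notin> S" using S a by force
  have "inj_on a {1..n}"
  proof (rule inj_onI)
    fix i j assume "i \<in> {1..n}" "j \<in> {1..n}" "a i = a j"
    hence "\<bar>a i\<bar> = \<bar>a j\<bar>" by simp
    moreover have "\<bar>a i\<bar> = int i" "\<bar>a j\<bar> = int j" using a \<open>i \<in> _\<close> \<open>j \<in> _\<close> by force+
    ultimately show "i = j" by simp
  qed
  thus "card S = n" using S by (simp add: card_image)
qed

lemma finite_signsets: "finite (signsets n)"
proof (rule finite_subset[of _ "Pow {-int n..int n}"])
  show "signsets n \<subseteq> Pow {-int n..int n}"
  proof
    fix S assume "S \<in> signsets n"
    then obtain a where S: "S = a ` {1..n}" and a: "\<forall>i\<in>{1..n}. a i = int i \<or> a i = - int i"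
      by (auto simp: signsets_def)
    have "a i \<in> {-int n..int n}" if "i \<in> {1..n}" for i using a that by force
    thus "S \<in> Pow {-int n..int n}" using S by auto
  qed
qed simp

lemma DB_Bstar:
  assumes n: "n \<ge> 1"
  shows "DB n \<inter> Bstar n = Sigma (signsets n) (\<lambda>S. {w\<in>Ds S. cl S w = True})"
    and "DB n - Bstar n = Sigma (signsets n) (\<lambda>S. {w\<in>Ds S. cl S w = False})"
proof -
  have ne: "S \<noteq> {}" if "S \<in> signsets n" for S
    using signsets_props(3)[OF that] n by auto
  have perm: "(bij_betw w S S \<and> (\<forall>x. x \<notin> S \<longrightarrow> w x = x)) \<longleftrightarrow> w permutes S" for w S
    by (auto intro: bij_imp_permutes permutes_imp_bij permutes_not_in)
  show "DB n \<inter> Bstar n = Sigma (signsets n) (\<lambda>S. {w\<in>Ds S. cl S w = True})"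
    using ne by (auto simp: DB_def Bstar_def Bn_def Ds_def cl_def perm)
  show "DB n - Bstar n = Sigma (signsets n) (\<lambda>S. {w\<in>Ds S. cl S w = False})"
    using ne by (auto simp: DB_def Bstar_def Bn_def Ds_def cl_def perm)
qed

lemma excB_eq:
  assumes "0 \<notin> S" "w \<in> Ds S"
  shows "excB (S, w) = exw S w"
proof -
  have "{a\<in>S. w a > a \<or> (a < 0 \<and> w a = a)} = {a\<in>S. a \<le> w a}"
  proof (rule set_eqI)
    fix a show "a \<in> {a\<in>S. w a > a \<or> (a < 0 \<and> w a = a)} \<longleftrightarrow> a \<in> {a\<in>S. a \<le> w a}"
      using assms by (cases "a = 0") (auto simp: Ds_def)
  qed
  thus ?thesis by (simp add: excB_def exw_def)
qed



lemma uniq0: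
  fixes g :: "real poly"
  assumes a: "\<forall>x::real. x \<noteq> 0 \<longrightarrow> poly g x = x ^ n * poly g (1 / x)"
      and b: "\<forall>x::real. x \<noteq> 0 \<longrightarrow> poly g x = x ^ (n + 1) * poly g (1 / x)"
  shows "g = 0"
proof (rule ccontr)
  assume g: "g \<noteq> 0"
  have z: "poly g y = 0" if y: "y \<noteq> 0" "y \<noteq> 1" for y
  proof -
    define x where "x = 1 / y"
    have x0: "x \<noteq> 0" "x \<noteq> 1" using y by (auto simp: x_def)
    have "x ^ n * poly g (1 / x) = x ^ (n + 1) * poly g (1 / x)" using a b x0 by metis
    hence "x ^ n * (1 - x) * poly g (1 / x) = 0" by (simp add: algebra_simps)
    hence "poly g (1 / x) = 0" using x0 by simp
    thus ?thesis by (simp add: x_def)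
  qed
  have "UNIV \<subseteq> {y. poly g y = 0} \<union> {0, 1}" using z by auto
  moreover have "finite ({y. poly g y = 0} \<union> {0, 1})" using poly_roots_finite[OF g] by simp
  ultimately have "finite (UNIV :: real set)" by (rule finite_subset)
  thus False by (simp add: infinite_UNIV_char_0)
qed

lemma poly_sym:
  fixes x :: real and b :: bool
  assumes n: "n \<ge> 1" and x: "x \<noteq> 0"
  defines "F \<equiv> (\<Sum>p\<in>Sigma (signsets n) (\<lambda>S. {w\<in>Ds S. cl S w = b}). monom (1::real) (excB p))"
  shows "poly F x = x ^ (if b then n else n + 1) * poly F (1 / x)"
proof -
  define d where "d = (if b then n else n + 1)"
  have eq: "poly F y = (\<Sum>S\<in>signsets n. \<Sum>w\<in>{w\<in>Ds S. cl S w = b}. y ^ exw S w)" for y :: real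
  proof -
    have "F = (\<Sum>S\<in>signsets n. \<Sum>w\<in>{w\<in>Ds S. cl S w = b}. monom 1 (excB (S, w)))"
      unfolding F_def
      by (subst sum.Sigma) (auto simp: finite_signsets signsets_props finite_Ds)
    also have "\<dots> = (\<Sum>S\<in>signsets n. \<Sum>w\<in>{w\<in>Ds S. cl S w = b}. monom 1 (exw S w))"
      by (rule sum.cong[OF refl], rule sum.cong[OF refl]) (auto simp: excB_eq signsets_props)
    finally show ?thesis by (simp add: poly_sum poly_monom)
  qed
  have per: "(\<Sum>w\<in>{w\<in>Ds S. cl S w = b}. x ^ exw S w)
      = x ^ d * (\<Sum>w\<in>{w\<in>Ds S. cl S w = b}. (1/x) ^ exw S w)" if S: "S \<in> signsets n" for S
  proof (rule pal_gen)
    have fS: "finite S" "0 \<notin> S" "card S = n" using signsets_props[OF S] by auto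
    show "finite {w\<in>Ds S. cl S w = b}" using finite_Ds[OF fS(1)] by simp
    show "\<forall>w\<in>{w\<in>Ds S. cl S w = b}. exw S w \<le> d"
    proof
      fix w assume "w \<in> {w\<in>Ds S. cl S w = b}"
      have "exw S w \<le> card S" unfolding exw_def using fS(1) by (intro card_mono) auto
      thus "exw S w \<le> d" using fS(3) by (simp add: d_def)
    qed
    have cnt_eq: "(\<Sum>w\<in>{w\<in>Ds S. cl S w = b}. if int (exw S w) = j then 1 else 0::int) = cnt S b j" for j
    proof -
      have "(\<Sum>w\<in>{w\<in>Ds S. cl S w = b}. if int (exw S w) = j then 1 else 0::int)
          = (\<Sum>w\<in>Ds S. if cl S w = b then (if int (exw S w) = j then 1 else 0) else 0)"
        by (rule sum.inter_filter[OF finite_Ds[OF fS(1)]])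
      also have "\<dots> = cnt S b j" unfolding cnt_def by (rule sum.cong) auto
      finally show ?thesis .
    qed
    show "\<forall>j::int. (\<Sum>w\<in>{w\<in>Ds S. cl S w = b}. if int (exw S w) = j then 1 else 0::int)
                   = (\<Sum>w\<in>{w\<in>Ds S. cl S w = b}. if int (exw S w) = int d - j then 1 else 0)"
    proof
      fix j :: int
      have "cnt S b j = cnt S b (int d - j)"
      proof (cases b)
        case True
        hence dn: "int d = int (card S)" using fS(3) by (simp add: d_def)
        have "cnt S True j = cnt S True (int (card S) - j)" using symm[OF fS(1,2)] by blast
        thus ?thesis using True unfolding dn by simp
      next
        case False
        hence dn: "int d = int (card S) + 1" using fS(3) by (simp add: d_def)
        have "cnt S False j = cnt S False (int (card S) + 1 - j)" using symm[OF fS(1,2)] by blast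
        thus ?thesis using False unfolding dn by simp
      qed
      thus "(\<Sum>w\<in>{w\<in>Ds S. cl S w = b}. if int (exw S w) = j then 1 else 0::int)
                   = (\<Sum>w\<in>{w\<in>Ds S. cl S w = b}. if int (exw S w) = int d - j then 1 else 0)"
        unfolding cnt_eq .
    qed
    show "x \<noteq> 0" by (rule x)
  qed
  have "poly F x = (\<Sum>S\<in>signsets n. x ^ d * (\<Sum>w\<in>{w\<in>Ds S. cl S w = b}. (1/x) ^ exw S w))"
    unfolding eq by (rule sum.cong[OF refl]) (rule per)
  also have "\<dots> = x ^ d * poly F (1 / x)"
    unfolding eq by (simp add: sum_distrib_left)
  finally show ?thesis by (simp add: d_def)
qed

theorem proposition4p1:
  fixes n :: nat
  assumes "n \<ge> 1"
  shows "fplus n = (\<Sum>p\<in>DB n \<inter> Bstar n. monom 1 (excB p))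
       \<and> fminus n = (\<Sum>p\<in>DB n - Bstar n. monom 1 (excB p))"
proof -
  define Fp where "Fp = (\<Sum>p\<in>DB n \<inter> Bstar n. monom (1::real) (excB p))"
  define Fm where "Fm = (\<Sum>p\<in>DB n - Bstar n. monom (1::real) (excB p))"
  have symp: "\<forall>x::real. x \<noteq> 0 \<longrightarrow> poly Fp x = x ^ n * poly Fp (1 / x)"
  proof (intro allI impI)
    fix x :: real assume x: "x \<noteq> 0"
    show "poly Fp x = x ^ n * poly Fp (1 / x)"
      using poly_sym[OF assms x, of True] unfolding Fp_def DB_Bstar(1)[OF assms] by simp
  qed
  have symm': "\<forall>x::real. x \<noteq> 0 \<longrightarrow> poly Fm x = x ^ (n + 1) * poly Fm (1 / x)"
  proof (intro allI impI)
    fix x :: real assume x: "x \<noteq> 0"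
    show "poly Fm x = x ^ (n + 1) * poly Fm (1 / x)"
      using poly_sym[OF assms x, of False] unfolding Fm_def DB_Bstar(2)[OF assms] by simp
  qed
  have f1: "finite (DB n \<inter> Bstar n)" unfolding DB_Bstar(1)[OF assms]
    by (auto intro!: finite_SigmaI simp: finite_signsets finite_Ds signsets_props)
  have f2: "finite (DB n - Bstar n)" unfolding DB_Bstar(2)[OF assms]
    by (auto intro!: finite_SigmaI simp: finite_signsets finite_Ds signsets_props)
  have finDB: "finite (DB n)"
  proof -
    have "DB n = (DB n \<inter> Bstar n) \<union> (DB n - Bstar n)" by auto
    thus ?thesis using f1 f2 by (metis finite_Un)
  qed
  have sum: "dB n = Fp + Fm"
    unfolding dB_def Fp_def Fm_def by (rule sum.Int_Diff[OF finDB])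
  define P where "P = (\<lambda>(fp, fm). dB n = fp + fm
      \<and> (\<forall>x::real. x \<noteq> 0 \<longrightarrow> poly fp x = x ^ n * poly fp (1 / x))
      \<and> (\<forall>x::real. x \<noteq> 0 \<longrightarrow> poly fm x = x ^ (n + 1) * poly fm (1 / x)))"
  have PF: "P (Fp, Fm)" unfolding P_def prod.case using sum symp symm' by blast
  have uniqP: "z = (Fp, Fm)" if "P z" for z
  proof -
    obtain fp fm where z: "z = (fp, fm)" by (cases z)
    have h: "dB n = fp + fm" "\<forall>x::real. x \<noteq> 0 \<longrightarrow> poly fp x = x ^ n * poly fp (1 / x)"
         "\<forall>x::real. x \<noteq> 0 \<longrightarrow> poly fm x = x ^ (n + 1) * poly fm (1 / x)"
      using that unfolding z P_def prod.case by blast+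
    define g where "g = fp - Fp"
    have g2: "g = Fm - fm" using h(1) sum by (simp add: g_def algebra_simps)
    have a: "\<forall>x::real. x \<noteq> 0 \<longrightarrow> poly g x = x ^ n * poly g (1 / x)"
    proof (intro allI impI)
      fix x :: real assume x: "x \<noteq> 0"
      have 1: "poly fp x = x ^ n * poly fp (1 / x)" using h(2) x by blast
      have 2: "poly Fp x = x ^ n * poly Fp (1 / x)" using symp x by blast
      show "poly g x = x ^ n * poly g (1 / x)" unfolding g_def poly_diff 1 2 by (simp add: algebra_simps)
    qed
    have b: "\<forall>x::real. x \<noteq> 0 \<longrightarrow> poly g x = x ^ (n + 1) * poly g (1 / x)"
    proof (intro allI impI)
      fix x :: real assume x: "x \<noteq> 0"
      have 1: "poly fm x = x ^ (n+1) * poly fm (1 / x)" using h(3) x by blast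
      have 2: "poly Fm x = x ^ (n+1) * poly Fm (1 / x)" using symm' x by blast
      show "poly g x = x ^ (n+1) * poly g (1 / x)" unfolding g2 poly_diff 1 2 by (simp add: algebra_simps)
    qed
    have "g = 0" by (rule uniq0[OF a b])
    hence "fp = Fp" "fm = Fm" using g2 by (simp_all add: g_def)
    thus ?thesis using z by simp
  qed
  have "fpm n = (THE z. P z)" unfolding fpm_def P_def by simp
  also have "\<dots> = (Fp, Fm)" using PF uniqP by (rule the_equality)
  finally have "fpm n = (Fp, Fm)" .
  thus ?thesis by (simp add: fplus_def fminus_def Fp_def Fm_def)
qed


end
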